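(* Let $C\subset\mathbb{C}$. Then $C$ is disconnected if and only if there is a closed connected set $A\subset\mathbb{C}$ that disconnects $C$.
   Context: A set $A\subset\mathbb{C}$ disconnects $C\subset\mathbb{C}$ if $C\cap A=\emptyset$ and at least two different connected components of $\mathbb{C}\setminus A$ intersect $C$. *)

theory Defs
  imports "HOL-Analysis.Analysis"
begin

definition disconnects :: "complex set \<Rightarrow> complex set \<Rightarrow> bool" where
  "disconnects A C \<longleftrightarrow> C \<inter> A = {} \<and>
     (\<exists>S T. S \<in> components (- A) \<and> T \<in> components (- A) \<and> S \<noteq> T \<and>
            S \<inter> C \<noteq> {} \<and> T \<inter> C \<noteq> {})"

end

theory Submission
  imports Defs
begin

lemma comp_eq_set:
  assumes "S \<in> components X" "x \<in> S"
  shows "S = connected_component_set X x"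
  using assms by (metis components_iff connected_component_eq mem_Collect_eq)

theorem lemma3p1:
  fixes C :: "complex set"
  shows "\<not> connected C \<longleftrightarrow> (\<exists>A::complex set. closed A \<and> connected A \<and> disconnects A C)"
proof
  assume "\<exists>A::complex set. closed A \<and> connected A \<and> disconnects A C"
  then obtain A S T where CA: "C \<inter> A = {}" and S: "S \<in> components (- A)" and T: "T \<in> components (- A)"
    and ST: "S \<noteq> T" and SC: "S \<inter> C \<noteq> {}" and TC: "T \<inter> C \<noteq> {}"
    unfolding disconnects_def by blast
  obtain x where x: "x \<in> S" "x \<in> C" using SC by blast
  obtain y where y: "y \<in> T" "y \<in> C" using TC by blast
  show "\<not> connected C"
  proof
    assume c: "connected C"
    have sub: "C \<subseteq> - A" using CA by blast
    have "C \<subseteq> connected_component_set (- A) x"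
      using connected_component_maximal[OF x(2) c sub] .
    hence "y \<in> S" using comp_eq_set[OF S x(1)] y(2) by blast
    hence "S \<inter> T \<noteq> {}" using y by blast
    thus False using components_eq[OF S T] ST by blast
  qed
next
  assume "\<not> connected C"
  then obtain E1 E2 where E1: "closedin (top_of_set C) E1" and E2: "closedin (top_of_set C) E2"
    and U: "E1 \<union> E2 = C" and D: "E1 \<inter> E2 = {}" and n1: "E1 \<noteq> {}" and n2: "E2 \<noteq> {}"
    unfolding connected_closedin_eq by blast
  obtain F1 where F1: "closed F1" "E1 = C \<inter> F1" using E1 closedin_closed by blast
  obtain F2 where F2: "closed F2" "E2 = C \<inter> F2" using E2 closedin_closed by blast
  have c1: "closure E1 \<subseteq> F1" using F1 by (simp add: closure_minimal)
  have c2: "closure E2 \<subseteq> F2" using F2 by (simp add: closure_minimal)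
  have "E1 \<inter> closure E2 = {}" using c2 F2 F1 D U by blast
  moreover have "E2 \<inter> closure E1 = {}" using c1 F2 F1 D U by blast
  ultimately obtain UU VV where UV: "UU \<inter> VV = {}" "open UU" "open VV" "E1 \<subseteq> UU" "E2 \<subseteq> VV"
    using separation_closures[of E1 E2] by blast
  define S where "S = - (UU \<union> VV)"
  have clS: "closed S" using UV unfolding S_def by auto
  obtain a where a: "a \<in> E1" using n1 by blast
  obtain b where b: "b \<in> E2" using n2 by blast
  have nab: "\<not> connected_component (- S) a b"
  proof
    assume "connected_component (- S) a b"
    then obtain T where T: "connected T" "T \<subseteq> - S" "a \<in> T" "b \<in> T"
      unfolding connected_component_def by blast
    have "T \<subseteq> UU \<union> VV" using T(2) unfolding S_def by auto
    moreover have "UU \<inter> VV \<inter> T = {}" using UV by blast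
    ultimately have "UU \<inter> T = {} \<or> VV \<inter> T = {}"
      using connectedD[OF T(1) UV(2) UV(3)] by blast
    thus False using T a b UV by blast
  qed
  obtain K where K: "K \<in> components S" "\<not> connected_component (- K) a b"
    using separation_by_component_closed_pointwise[OF clS nab] by blast
  have clK: "closed K" using closed_components[OF clS K(1)] .
  have coK: "connected K" using in_components_connected[OF K(1)] .
  have KS: "K \<subseteq> S" using in_components_subset[OF K(1)] .
  have CK: "C \<inter> K = {}" using KS U UV unfolding S_def by blast
  have aK: "a \<in> - K" "b \<in> - K" using CK a b U by blast+
  have "disconnects K C"
    unfolding disconnects_def
  proof (intro conjI exI)
    show "C \<inter> K = {}" by fact
    show "connected_component_set (- K) a \<in> components (- K)" using aK by (simp add: componentsI)
    show "connected_component_set (- K) b \<in> components (- K)" using aK by (simp add: componentsI)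
    show "connected_component_set (- K) a \<noteq> connected_component_set (- K) b"
      using K(2) aK by (metis connected_component_eq_eq)
    have "a \<in> connected_component_set (- K) a" using aK by simp
    thus "connected_component_set (- K) a \<inter> C \<noteq> {}" using a U by blast
    have "b \<in> connected_component_set (- K) b" using aK by simp
    thus "connected_component_set (- K) b \<inter> C \<noteq> {}" using b U by blast
  qed
  thus "\<exists>A::complex set. closed A \<and> connected A \<and> disconnects A C"
    using clK coK by blast
qed

end
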